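(* Let $F$ and $G$ be objects in $\overline{\mathrm{Pro}}(\mathcal{C})$. Then every connected component of the poset of 1-morphisms from $F$ to $G$ (that is, every morphism from $F$ to $G$ in $\overline{\mathrm{Pro}}(\mathcal{C})$) is directed.
   Context: Let $\mathcal{C}$ be a category. Objects of $\overline{\mathrm{Pro}}(\mathcal{C})$ are diagrams $F:A\to\mathcal{C}$ with $A$ a cofinite directed poset of infinite height (poset as category with $u\to v$ iff $u\ge v$; cofinite: each $\{z\le x\}$ finite; infinite height: every element has a strictly larger one). A 1-morphism $F^A\to G^B$ is a pair $(\alpha,\phi)$ with $\alpha:B\to A$ strictly increasing and $\phi:F\circ\alpha\to G$ a natural transformation; 1-morphisms are partially ordered by $(\alpha',\phi')\geq(\alpha,\phi)$ iff $\alpha'(b)\ge\alpha(b)$ and $\phi'_b=\phi_b\circ F(\alpha'(b)\to\alpha(b))$ for all $b\in B$. Morphisms $F\to G$ in $\overline{\mathrm{Pro}}(\mathcal{C})$ are the connected components of this poset. *)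

theory Defs
  imports Main
begin

record ('o,'m) cat =
  Ob  :: "'o set"
  Hom :: "'o \<Rightarrow> 'o \<Rightarrow> 'm set"
  cmp :: "'m \<Rightarrow> 'm \<Rightarrow> 'm"
  idm :: "'o \<Rightarrow> 'm"

definition category :: "('o,'m) cat \<Rightarrow> bool" where
  "category C \<longleftrightarrow>
     (\<forall>x\<in>Ob C. idm C x \<in> Hom C x x) \<and>
     (\<forall>x\<in>Ob C. \<forall>y\<in>Ob C. \<forall>z\<in>Ob C. \<forall>f\<in>Hom C x y. \<forall>g\<in>Hom C y z. cmp C g f \<in> Hom C x z) \<and>
     (\<forall>x\<in>Ob C. \<forall>y\<in>Ob C. \<forall>f\<in>Hom C x y. cmp C f (idm C x) = f \<and> cmp C (idm C y) f = f) \<and>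
     (\<forall>w\<in>Ob C. \<forall>x\<in>Ob C. \<forall>y\<in>Ob C. \<forall>z\<in>Ob C. \<forall>f\<in>Hom C w x. \<forall>g\<in>Hom C x y. \<forall>h\<in>Hom C y z.
        cmp C h (cmp C g f) = cmp C (cmp C h g) f)"

text \<open>A diagram: index set with order relation dle, and a functor from the poset
  (viewed as a category with an arrow u \<rightarrow> v iff u \<ge> v) to C.
  arr D u v is the image of the arrow u \<rightarrow> v (for dle D v u).\<close>

record ('a,'o,'m) diag =
  Idx :: "'a set"
  dle :: "'a \<Rightarrow> 'a \<Rightarrow> bool"
  obj :: "'a \<Rightarrow> 'o"
  arr :: "'a \<Rightarrow> 'a \<Rightarrow> 'm"

definition dless :: "('a,'o,'m) diag \<Rightarrow> 'a \<Rightarrow> 'a \<Rightarrow> bool" where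
  "dless D u v \<longleftrightarrow> dle D u v \<and> u \<noteq> v"

definition partial_order_on' :: "'a set \<Rightarrow> ('a \<Rightarrow> 'a \<Rightarrow> bool) \<Rightarrow> bool" where
  "partial_order_on' A le \<longleftrightarrow>
     (\<forall>x\<in>A. le x x) \<and>
     (\<forall>x\<in>A. \<forall>y\<in>A. le x y \<and> le y x \<longrightarrow> x = y) \<and>
     (\<forall>x\<in>A. \<forall>y\<in>A. \<forall>z\<in>A. le x y \<and> le y z \<longrightarrow> le x z)"

definition directed_on :: "'a set \<Rightarrow> ('a \<Rightarrow> 'a \<Rightarrow> bool) \<Rightarrow> bool" where
  "directed_on S le \<longleftrightarrow> S \<noteq> {} \<and> (\<forall>x\<in>S. \<forall>y\<in>S. \<exists>z\<in>S. le x z \<and> le y z)"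

definition cofinite_directed_infinite_height :: "'a set \<Rightarrow> ('a \<Rightarrow> 'a \<Rightarrow> bool) \<Rightarrow> bool" where
  "cofinite_directed_infinite_height A le \<longleftrightarrow>
     partial_order_on' A le \<and> directed_on A le \<and>
     (\<forall>x\<in>A. finite {z\<in>A. le z x}) \<and>
     (\<forall>x\<in>A. \<exists>y\<in>A. le x y \<and> x \<noteq> y)"

definition diagram :: "('o,'m) cat \<Rightarrow> ('a,'o,'m) diag \<Rightarrow> bool" where
  "diagram C D \<longleftrightarrow>
     (\<forall>u\<in>Idx D. obj D u \<in> Ob C) \<and>
     (\<forall>u\<in>Idx D. \<forall>v\<in>Idx D. dle D v u \<longrightarrow> arr D u v \<in> Hom C (obj D u) (obj D v)) \<and>
     (\<forall>u\<in>Idx D. arr D u u = idm C (obj D u)) \<and>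
     (\<forall>u\<in>Idx D. \<forall>v\<in>Idx D. \<forall>w\<in>Idx D. dle D v u \<and> dle D w v \<longrightarrow>
        cmp C (arr D v w) (arr D u v) = arr D u w)"

definition pro_obj :: "('o,'m) cat \<Rightarrow> ('a,'o,'m) diag \<Rightarrow> bool" where
  "pro_obj C D \<longleftrightarrow> cofinite_directed_infinite_height (Idx D) (dle D) \<and> diagram C D"

definition one_mor ::
  "('o,'m) cat \<Rightarrow> ('a,'o,'m) diag \<Rightarrow> ('b,'o,'m) diag \<Rightarrow> ('b \<Rightarrow> 'a) \<times> ('b \<Rightarrow> 'm) \<Rightarrow> bool" where
  "one_mor C F G m \<longleftrightarrow> (case m of (\<alpha>, \<phi>) \<Rightarrow>
     (\<forall>b\<in>Idx G. \<alpha> b \<in> Idx F) \<and>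
     (\<forall>b\<in>Idx G. \<forall>b'\<in>Idx G. dless G b b' \<longrightarrow> dless F (\<alpha> b) (\<alpha> b')) \<and>
     (\<forall>b\<in>Idx G. \<phi> b \<in> Hom C (obj F (\<alpha> b)) (obj G b)) \<and>
     (\<forall>b\<in>Idx G. \<forall>b'\<in>Idx G. dle G b' b \<longrightarrow>
        cmp C (arr G b b') (\<phi> b) = cmp C (\<phi> b') (arr F (\<alpha> b) (\<alpha> b'))))"

definition mor_le ::
  "('o,'m) cat \<Rightarrow> ('a,'o,'m) diag \<Rightarrow> ('b,'o,'m) diag \<Rightarrow>
   ('b \<Rightarrow> 'a) \<times> ('b \<Rightarrow> 'm) \<Rightarrow> ('b \<Rightarrow> 'a) \<times> ('b \<Rightarrow> 'm) \<Rightarrow> bool" where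
  "mor_le C F G m m' \<longleftrightarrow> (case m of (\<alpha>, \<phi>) \<Rightarrow> case m' of (\<alpha>', \<phi>') \<Rightarrow>
     (\<forall>b\<in>Idx G. dle F (\<alpha> b) (\<alpha>' b) \<and> \<phi>' b = cmp C (\<phi> b) (arr F (\<alpha>' b) (\<alpha> b))))"

definition mor_connected ::
  "('o,'m) cat \<Rightarrow> ('a,'o,'m) diag \<Rightarrow> ('b,'o,'m) diag \<Rightarrow>
   ('b \<Rightarrow> 'a) \<times> ('b \<Rightarrow> 'm) \<Rightarrow> ('b \<Rightarrow> 'a) \<times> ('b \<Rightarrow> 'm) \<Rightarrow> bool" where
  "mor_connected C F G = (\<lambda>m m'. one_mor C F G m \<and> one_mor C F G m' \<and>
      (mor_le C F G m m' \<or> mor_le C F G m' m))\<^sup>*\<^sup>*"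

definition mor_components ::
  "('o,'m) cat \<Rightarrow> ('a,'o,'m) diag \<Rightarrow> ('b,'o,'m) diag \<Rightarrow> (('b \<Rightarrow> 'a) \<times> ('b \<Rightarrow> 'm)) set set" where
  "mor_components C F G =
     {{m'. mor_connected C F G m m'} | m. one_mor C F G m}"

end

theory Submission
  imports Defs
begin

lemma fin_ub:
  assumes po: "partial_order_on' A le" and dir: "directed_on A le"
  shows "finite S \<Longrightarrow> S \<subseteq> A \<Longrightarrow> \<exists>u\<in>A. \<forall>s\<in>S. le s u"
proof (induction S rule: finite_induct)
  case empty
  then show ?case using dir unfolding directed_on_def by auto
next
  case (insert x S)
  then obtain u where u: "u \<in> A" "\<forall>s\<in>S. le s u" by auto
  have xA: "x \<in> A" using insert.prems by auto
  from dir xA u(1) obtain z where z: "z\<in>A" "le x z" "le u z"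
    unfolding directed_on_def by blast
  have "\<forall>s\<in>S. le s z" using u z po insert.prems unfolding partial_order_on'_def by blast
  then show ?case using z by auto
qed

lemma strict_above:
  fixes A :: "'a set" and B :: "'b set"
  assumes hA: "cofinite_directed_infinite_height A le"
    and hB: "cofinite_directed_infinite_height B leB"
    and f1: "\<forall>b\<in>B. f1 b \<in> A" and f2: "\<forall>b\<in>B. f2 b \<in> A"
  shows "\<exists>\<gamma>. (\<forall>b\<in>B. \<gamma> b \<in> A \<and> le (f1 b) (\<gamma> b) \<and> le (f2 b) (\<gamma> b)) \<and>
     (\<forall>b\<in>B. \<forall>b'\<in>B. leB b b' \<and> b \<noteq> b' \<longrightarrow> le (\<gamma> b) (\<gamma> b') \<and> \<gamma> b \<noteq> \<gamma> b')"
proof -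
  have poA: "partial_order_on' A le" and dirA: "directed_on A le"
    and infA: "\<forall>x\<in>A. \<exists>y\<in>A. le x y \<and> x \<noteq> y"
    using hA unfolding cofinite_directed_infinite_height_def by auto
  have poB: "partial_order_on' B leB" and finB: "\<forall>x\<in>B. finite {z\<in>B. leB z x}"
    using hB unfolding cofinite_directed_infinite_height_def by auto
  define R where "R = {(b', b). b \<in> B \<and> b' \<in> B \<and> leB b' b \<and> b' \<noteq> b}"
  define h where "h = (\<lambda>b. card {z\<in>B. leB z b})"
  have "R \<subseteq> measure h"
  proof
    fix p assume "p \<in> R"
    then obtain b' b where p: "p = (b', b)" "b \<in> B" "b' \<in> B" "leB b' b" "b' \<noteq> b"
      unfolding R_def by auto
    have "{z\<in>B. leB z b'} \<subset> {z\<in>B. leB z b}"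
    proof
      show "{z\<in>B. leB z b'} \<subseteq> {z\<in>B. leB z b}" using p poB unfolding partial_order_on'_def by blast
      have "b \<in> {z\<in>B. leB z b}" using p poB unfolding partial_order_on'_def by blast
      moreover have "b \<notin> {z\<in>B. leB z b'}" using p poB unfolding partial_order_on'_def by blast
      ultimately show "{z\<in>B. leB z b'} \<noteq> {z\<in>B. leB z b}" by blast
    qed
    then have "h b' < h b" unfolding h_def using finB p by (simp add: psubset_card_mono)
    then show "p \<in> measure h" using p by simp
  qed
  then have wfR: "wf R" using wf_subset wf_measure by blast
  define P where "P = (\<lambda>g b a. a \<in> A \<and> le (f1 b) a \<and> le (f2 b) a \<and>
     (\<forall>b'\<in>B. leB b' b \<and> b' \<noteq> b \<longrightarrow> le (g b') a \<and> g b' \<noteq> a))"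
  define H where "H = (\<lambda>g b. SOME a. P g b a)"
  define \<gamma> where "\<gamma> = wfrec R H"
  have Pcut: "P (cut \<gamma> R b) b = P \<gamma> b" if "b \<in> B" for b
  proof -
    have "\<forall>b'\<in>B. leB b' b \<and> b' \<noteq> b \<longrightarrow> cut \<gamma> R b b' = \<gamma> b'"
      using that by (auto simp: cut_apply R_def)
    then show ?thesis unfolding P_def by (intro ext) (metis (no_types, lifting))
  qed
  have geq: "\<gamma> b = H \<gamma> b" if "b \<in> B" for b
    using wfrec[OF wfR, of H b] Pcut[OF that] unfolding \<gamma>_def H_def by simp
  have main: "b \<in> B \<longrightarrow> P \<gamma> b (\<gamma> b)" for b
  proof (induction b rule: wf_induct[OF wfR])
    case (1 b)
    show ?case
    proof
      assume bB: "b \<in> B"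
      define S where "S = {f1 b, f2 b} \<union> \<gamma> ` {b'\<in>B. leB b' b \<and> b' \<noteq> b}"
      have IH: "\<forall>b'\<in>B. leB b' b \<and> b' \<noteq> b \<longrightarrow> P \<gamma> b' (\<gamma> b')"
        using 1 bB unfolding R_def by auto
      have "finite {b'\<in>B. leB b' b \<and> b' \<noteq> b}"
        using finB bB by (rule_tac finite_subset[of _ "{z\<in>B. leB z b}"]) auto
      then have "finite S" unfolding S_def by auto
      moreover have "S \<subseteq> A" unfolding S_def using IH f1 f2 bB unfolding P_def by auto
      ultimately obtain u where u: "u \<in> A" "\<forall>s\<in>S. le s u" using fin_ub[OF poA dirA] by blast
      obtain y where y: "y \<in> A" "le u y" "u \<noteq> y" using infA u by blast
      have "P \<gamma> b y"
        unfolding P_def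
      proof (intro conjI ballI impI)
        show "y \<in> A" by fact
        show "le (f1 b) y" using u y poA f1 bB unfolding S_def partial_order_on'_def by blast
        show "le (f2 b) y" using u y poA f2 bB unfolding S_def partial_order_on'_def by blast
        fix b' assume b': "b' \<in> B" "leB b' b \<and> b' \<noteq> b"
        have gA: "\<gamma> b' \<in> A" using IH b' unfolding P_def by auto
        have gu: "le (\<gamma> b') u" using u b' unfolding S_def by auto
        show "le (\<gamma> b') y" using gu y poA gA u unfolding partial_order_on'_def by blast
        show "\<gamma> b' \<noteq> y"
        proof
          assume "\<gamma> b' = y"
          then have "le y u" using gu by simp
          then show False using y u poA unfolding partial_order_on'_def by blast
        qed
      qed
      then have "P \<gamma> b (H \<gamma> b)" unfolding H_def by (rule someI)
      then show "P \<gamma> b (\<gamma> b)" using geq[OF bB] by simp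
    qed
  qed
  show ?thesis
  proof (intro exI conjI ballI impI)
    fix b assume "b \<in> B"
    then show "\<gamma> b \<in> A" "le (f1 b) (\<gamma> b)" "le (f2 b) (\<gamma> b)" using main unfolding P_def by auto
  next
    fix b b' assume "b \<in> B" "b' \<in> B" "leB b b' \<and> b \<noteq> b'"
    then show "le (\<gamma> b) (\<gamma> b')" "\<gamma> b \<noteq> \<gamma> b'" using main[of b'] unfolding P_def by auto
  qed
qed

locale setup3 =
  fixes C :: "('o,'m) cat" and F :: "('a,'o,'m) diag" and G :: "('b,'o,'m) diag"
  assumes cat: "category C" and pF: "pro_obj C F" and pG: "pro_obj C G"
begin

lemma idm_hom: "x \<in> Ob C \<Longrightarrow> idm C x \<in> Hom C x x"
  using cat unfolding category_def by blast
lemma cmp_hom: "x \<in> Ob C \<Longrightarrow> y \<in> Ob C \<Longrightarrow> z \<in> Ob C \<Longrightarrow> f \<in> Hom C x y \<Longrightarrow> g \<in> Hom C y z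
   \<Longrightarrow> cmp C g f \<in> Hom C x z"
  using cat unfolding category_def by blast
lemma runit: "x \<in> Ob C \<Longrightarrow> y \<in> Ob C \<Longrightarrow> f \<in> Hom C x y \<Longrightarrow> cmp C f (idm C x) = f"
  using cat unfolding category_def by blast
lemma assoc: "w \<in> Ob C \<Longrightarrow> x \<in> Ob C \<Longrightarrow> y \<in> Ob C \<Longrightarrow> z \<in> Ob C \<Longrightarrow> f \<in> Hom C w x
   \<Longrightarrow> g \<in> Hom C x y \<Longrightarrow> h \<in> Hom C y z \<Longrightarrow> cmp C h (cmp C g f) = cmp C (cmp C h g) f"
  using cat unfolding category_def by blast

lemma hA: "cofinite_directed_infinite_height (Idx F) (dle F)"
  using pF unfolding pro_obj_def by blast
lemma hB: "cofinite_directed_infinite_height (Idx G) (dle G)"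
  using pG unfolding pro_obj_def by blast
lemma poA: "partial_order_on' (Idx F) (dle F)"
  using hA unfolding cofinite_directed_infinite_height_def by blast
lemma poB: "partial_order_on' (Idx G) (dle G)"
  using hB unfolding cofinite_directed_infinite_height_def by blast
lemma transA: "x \<in> Idx F \<Longrightarrow> y \<in> Idx F \<Longrightarrow> z \<in> Idx F \<Longrightarrow> dle F x y \<Longrightarrow> dle F y z \<Longrightarrow> dle F x z"
  using poA unfolding partial_order_on'_def by blast
lemma reflA: "x \<in> Idx F \<Longrightarrow> dle F x x"
  using poA unfolding partial_order_on'_def by blast

lemma objF: "u \<in> Idx F \<Longrightarrow> obj F u \<in> Ob C"
  using pF unfolding pro_obj_def diagram_def by blast
lemma objG: "u \<in> Idx G \<Longrightarrow> obj G u \<in> Ob C"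
  using pG unfolding pro_obj_def diagram_def by blast
lemma arrF: "u \<in> Idx F \<Longrightarrow> v \<in> Idx F \<Longrightarrow> dle F v u \<Longrightarrow> arr F u v \<in> Hom C (obj F u) (obj F v)"
  using pF unfolding pro_obj_def diagram_def by blast
lemma arrG: "u \<in> Idx G \<Longrightarrow> v \<in> Idx G \<Longrightarrow> dle G v u \<Longrightarrow> arr G u v \<in> Hom C (obj G u) (obj G v)"
  using pG unfolding pro_obj_def diagram_def by blast
lemma arrF_id: "u \<in> Idx F \<Longrightarrow> arr F u u = idm C (obj F u)"
  using pF unfolding pro_obj_def diagram_def by blast
lemma arrF_comp: "u \<in> Idx F \<Longrightarrow> v \<in> Idx F \<Longrightarrow> w \<in> Idx F \<Longrightarrow> dle F v u \<Longrightarrow> dle F w v \<Longrightarrow>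
   cmp C (arr F v w) (arr F u v) = arr F u w"
  using pF unfolding pro_obj_def diagram_def by blast

lemma om:
  assumes "one_mor C F G (\<alpha>, \<phi>)"
  shows om_idx: "\<And>b. b \<in> Idx G \<Longrightarrow> \<alpha> b \<in> Idx F"
    and om_strict: "\<And>b b'. b \<in> Idx G \<Longrightarrow> b' \<in> Idx G \<Longrightarrow> dless G b b' \<Longrightarrow> dless F (\<alpha> b) (\<alpha> b')"
    and om_hom: "\<And>b. b \<in> Idx G \<Longrightarrow> \<phi> b \<in> Hom C (obj F (\<alpha> b)) (obj G b)"
    and om_nat: "\<And>b b'. b \<in> Idx G \<Longrightarrow> b' \<in> Idx G \<Longrightarrow> dle G b' b \<Longrightarrow>
        cmp C (arr G b b') (\<phi> b) = cmp C (\<phi> b') (arr F (\<alpha> b) (\<alpha> b'))"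
  using assms unfolding one_mor_def by auto

lemma om_mono:
  assumes "one_mor C F G (\<alpha>, \<phi>)" "b \<in> Idx G" "b' \<in> Idx G" "dle G b' b"
  shows "dle F (\<alpha> b') (\<alpha> b)"
proof (cases "b' = b")
  case True then show ?thesis using reflA om_idx[OF assms(1) assms(2)] by simp
next
  case False then show ?thesis using om_strict[OF assms(1) assms(3) assms(2)] assms unfolding dless_def by auto
qed

lemma le_refl:
  assumes "one_mor C F G (\<alpha>, \<phi>)"
  shows "mor_le C F G (\<alpha>, \<phi>) (\<alpha>, \<phi>)"
  unfolding mor_le_def split
proof (intro ballI conjI)
  fix b assume b: "b \<in> Idx G"
  show "dle F (\<alpha> b) (\<alpha> b)" using reflA om_idx[OF assms b] by blast
  show "\<phi> b = cmp C (\<phi> b) (arr F (\<alpha> b) (\<alpha> b))"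
    using arrF_id[OF om_idx[OF assms b]] runit[OF objF[OF om_idx[OF assms b]] objG[OF b] om_hom[OF assms b]]
    by simp
qed

lemma le_trans:
  assumes a: "one_mor C F G (\<alpha>, \<phi>)" and b: "one_mor C F G (\<beta>, \<psi>)" and c: "one_mor C F G (\<gamma>, \<chi>)"
    and ab: "mor_le C F G (\<alpha>, \<phi>) (\<beta>, \<psi>)" and bc: "mor_le C F G (\<beta>, \<psi>) (\<gamma>, \<chi>)"
  shows "mor_le C F G (\<alpha>, \<phi>) (\<gamma>, \<chi>)"
  unfolding mor_le_def split
proof (intro ballI conjI)
  fix x assume x: "x \<in> Idx G"
  have I: "\<alpha> x \<in> Idx F" "\<beta> x \<in> Idx F" "\<gamma> x \<in> Idx F"
    using om_idx[OF a x] om_idx[OF b x] om_idx[OF c x] by auto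
  have l1: "dle F (\<alpha> x) (\<beta> x)" "\<psi> x = cmp C (\<phi> x) (arr F (\<beta> x) (\<alpha> x))"
    using ab x unfolding mor_le_def by auto
  have l2: "dle F (\<beta> x) (\<gamma> x)" "\<chi> x = cmp C (\<psi> x) (arr F (\<gamma> x) (\<beta> x))"
    using bc x unfolding mor_le_def by auto
  show "dle F (\<alpha> x) (\<gamma> x)" using transA I l1 l2 by blast
  have "\<chi> x = cmp C (cmp C (\<phi> x) (arr F (\<beta> x) (\<alpha> x))) (arr F (\<gamma> x) (\<beta> x))"
    using l1 l2 by simp
  also have "\<dots> = cmp C (\<phi> x) (cmp C (arr F (\<beta> x) (\<alpha> x)) (arr F (\<gamma> x) (\<beta> x)))"
    using assoc[OF objF[OF I(3)] objF[OF I(2)] objF[OF I(1)] objG[OF x]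
       arrF[OF I(3) I(2) l2(1)] arrF[OF I(2) I(1) l1(1)] om_hom[OF a x]] by simp
  also have "\<dots> = cmp C (\<phi> x) (arr F (\<gamma> x) (\<alpha> x))"
    using arrF_comp[OF I(3) I(2) I(1) l2(1) l1(1)] by simp
  finally show "\<chi> x = cmp C (\<phi> x) (arr F (\<gamma> x) (\<alpha> x))" .
qed

lemma le_ext:
  assumes m: "one_mor C F G (\<alpha>, \<phi>)" and a: "one_mor C F G (\<alpha>1, \<phi>1)"
    and ma: "mor_le C F G (\<alpha>, \<phi>) (\<alpha>1, \<phi>1)"
    and gI: "\<forall>x\<in>Idx G. \<gamma> x \<in> Idx F \<and> dle F (\<alpha>1 x) (\<gamma> x)"
  shows "mor_le C F G (\<alpha>1, \<phi>1) (\<gamma>, \<lambda>x. cmp C (\<phi> x) (arr F (\<gamma> x) (\<alpha> x)))"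
  unfolding mor_le_def split
proof (intro ballI conjI)
  fix x assume x: "x \<in> Idx G"
  have I: "\<alpha> x \<in> Idx F" "\<alpha>1 x \<in> Idx F" "\<gamma> x \<in> Idx F"
    using om_idx[OF m x] om_idx[OF a x] gI x by auto
  have l1: "dle F (\<alpha> x) (\<alpha>1 x)" "\<phi>1 x = cmp C (\<phi> x) (arr F (\<alpha>1 x) (\<alpha> x))"
    using ma x unfolding mor_le_def by auto
  have l2: "dle F (\<alpha>1 x) (\<gamma> x)" using gI x by auto
  show "dle F (\<alpha>1 x) (\<gamma> x)" by fact
  have "cmp C (\<phi>1 x) (arr F (\<gamma> x) (\<alpha>1 x)) = cmp C (cmp C (\<phi> x) (arr F (\<alpha>1 x) (\<alpha> x))) (arr F (\<gamma> x) (\<alpha>1 x))"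
    using l1 by simp
  also have "\<dots> = cmp C (\<phi> x) (cmp C (arr F (\<alpha>1 x) (\<alpha> x)) (arr F (\<gamma> x) (\<alpha>1 x)))"
    using assoc[OF objF[OF I(3)] objF[OF I(2)] objF[OF I(1)] objG[OF x]
       arrF[OF I(3) I(2) l2] arrF[OF I(2) I(1) l1(1)] om_hom[OF m x]] by simp
  also have "\<dots> = cmp C (\<phi> x) (arr F (\<gamma> x) (\<alpha> x))"
    using arrF_comp[OF I(3) I(2) I(1) l2 l1(1)] by simp
  finally show "cmp C (\<phi> x) (arr F (\<gamma> x) (\<alpha> x)) = cmp C (\<phi>1 x) (arr F (\<gamma> x) (\<alpha>1 x))" by simp
qed

lemma amalg:
  assumes m: "one_mor C F G (\<alpha>, \<phi>)" and a: "one_mor C F G (\<alpha>1, \<phi>1)" and b: "one_mor C F G (\<alpha>2, \<phi>2)"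
    and ma: "mor_le C F G (\<alpha>, \<phi>) (\<alpha>1, \<phi>1)" and mb: "mor_le C F G (\<alpha>, \<phi>) (\<alpha>2, \<phi>2)"
  shows "\<exists>c. one_mor C F G c \<and> mor_le C F G (\<alpha>1, \<phi>1) c \<and> mor_le C F G (\<alpha>2, \<phi>2) c"
proof -
  obtain \<gamma> where g1: "\<forall>b\<in>Idx G. \<gamma> b \<in> Idx F \<and> dle F (\<alpha>1 b) (\<gamma> b) \<and> dle F (\<alpha>2 b) (\<gamma> b)"
    and g2: "\<forall>b\<in>Idx G. \<forall>b'\<in>Idx G. dle G b b' \<and> b \<noteq> b' \<longrightarrow> dle F (\<gamma> b) (\<gamma> b') \<and> \<gamma> b \<noteq> \<gamma> b'"
    using strict_above[OF hA hB, of \<alpha>1 \<alpha>2] om_idx[OF a] om_idx[OF b] by blast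
  have gmono: "dle F (\<gamma> b') (\<gamma> b)" if "b \<in> Idx G" "b' \<in> Idx G" "dle G b' b" for b b'
    using that g1 g2 reflA by (cases "b = b'") auto
  have ag: "dle F (\<alpha> x) (\<gamma> x)" if x: "x \<in> Idx G" for x
  proof -
    have "dle F (\<alpha> x) (\<alpha>1 x)" using ma x unfolding mor_le_def by auto
    then show ?thesis using transA om_idx[OF m x] om_idx[OF a x] g1 x by blast
  qed
  define \<psi> where "\<psi> = (\<lambda>x. cmp C (\<phi> x) (arr F (\<gamma> x) (\<alpha> x)))"
  have c: "one_mor C F G (\<gamma>, \<psi>)"
    unfolding one_mor_def split
  proof (intro conjI ballI impI)
    fix x assume x: "x \<in> Idx G"
    show "\<gamma> x \<in> Idx F" using g1 x by auto
    show "\<psi> x \<in> Hom C (obj F (\<gamma> x)) (obj G x)" unfolding \<psi>_def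
      using cmp_hom[OF objF[OF \<open>\<gamma> x \<in> Idx F\<close>] objF[OF om_idx[OF m x]] objG[OF x]
        arrF[OF \<open>\<gamma> x \<in> Idx F\<close> om_idx[OF m x] ag[OF x]] om_hom[OF m x]] .
  next
    fix x y assume x: "x \<in> Idx G" and y: "y \<in> Idx G" and "dless G x y"
    then show "dless F (\<gamma> x) (\<gamma> y)" using g2 unfolding dless_def by auto
  next
    fix b b' assume b: "b \<in> Idx G" and b': "b' \<in> Idx G" and bb: "dle G b' b"
    have I: "\<alpha> b \<in> Idx F" "\<alpha> b' \<in> Idx F" "\<gamma> b \<in> Idx F" "\<gamma> b' \<in> Idx F"
      using om_idx[OF m b] om_idx[OF m b'] g1 b b' by auto
    have o1: "dle F (\<alpha> b') (\<alpha> b)" using om_mono[OF m b b' bb] .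
    have o2: "dle F (\<alpha> b) (\<gamma> b)" "dle F (\<alpha> b') (\<gamma> b')" using ag b b' by auto
    have o3: "dle F (\<gamma> b') (\<gamma> b)" using gmono b b' bb by auto
    have "cmp C (arr G b b') (\<psi> b) = cmp C (cmp C (arr G b b') (\<phi> b)) (arr F (\<gamma> b) (\<alpha> b))"
      unfolding \<psi>_def
      using assoc[OF objF[OF I(3)] objF[OF I(1)] objG[OF b] objG[OF b']
          arrF[OF I(3) I(1) o2(1)] om_hom[OF m b] arrG[OF b b' bb]] .
    also have "\<dots> = cmp C (cmp C (\<phi> b') (arr F (\<alpha> b) (\<alpha> b'))) (arr F (\<gamma> b) (\<alpha> b))"
      using om_nat[OF m b b' bb] by simp
    also have "\<dots> = cmp C (\<phi> b') (cmp C (arr F (\<alpha> b) (\<alpha> b')) (arr F (\<gamma> b) (\<alpha> b)))"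
      using assoc[OF objF[OF I(3)] objF[OF I(1)] objF[OF I(2)] objG[OF b']
          arrF[OF I(3) I(1) o2(1)] arrF[OF I(1) I(2) o1] om_hom[OF m b']] by simp
    also have "\<dots> = cmp C (\<phi> b') (arr F (\<gamma> b) (\<alpha> b'))"
      using arrF_comp[OF I(3) I(1) I(2) o2(1) o1] by simp
    also have "\<dots> = cmp C (\<phi> b') (cmp C (arr F (\<gamma> b') (\<alpha> b')) (arr F (\<gamma> b) (\<gamma> b')))"
      using arrF_comp[OF I(3) I(4) I(2) o3 o2(2)] by simp
    also have "\<dots> = cmp C (\<psi> b') (arr F (\<gamma> b) (\<gamma> b'))"
      unfolding \<psi>_def
      using assoc[OF objF[OF I(3)] objF[OF I(4)] objF[OF I(2)] objG[OF b']
          arrF[OF I(3) I(4) o3] arrF[OF I(4) I(2) o2(2)] om_hom[OF m b']] .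
    finally show "cmp C (arr G b b') (\<psi> b) = cmp C (\<psi> b') (arr F (\<gamma> b) (\<gamma> b'))" .
  qed
  have "mor_le C F G (\<alpha>1, \<phi>1) (\<gamma>, \<psi>)" unfolding \<psi>_def
    by (rule le_ext[OF m a ma]) (use g1 in auto)
  moreover have "mor_le C F G (\<alpha>2, \<phi>2) (\<gamma>, \<psi>)" unfolding \<psi>_def
    by (rule le_ext[OF m b mb]) (use g1 in auto)
  ultimately show ?thesis using c by blast
qed

lemma le_refl': "one_mor C F G m \<Longrightarrow> mor_le C F G m m"
proof -
  assume h: "one_mor C F G m"
  obtain p q where m: "m = (p, q)" by (cases m)
  show ?thesis using le_refl[of p q] h unfolding m by blast
qed

lemma le_trans': "one_mor C F G a \<Longrightarrow> one_mor C F G b \<Longrightarrow> one_mor C F G c \<Longrightarrow>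
   mor_le C F G a b \<Longrightarrow> mor_le C F G b c \<Longrightarrow> mor_le C F G a c"
proof -
  assume h: "one_mor C F G a" "one_mor C F G b" "one_mor C F G c" "mor_le C F G a b" "mor_le C F G b c"
  obtain p q where a: "a = (p, q)" by (cases a)
  obtain p1 q1 where b: "b = (p1, q1)" by (cases b)
  obtain p2 q2 where c: "c = (p2, q2)" by (cases c)
  show ?thesis using le_trans[of p q p1 q1 p2 q2] h unfolding a b c by blast
qed

lemma amalg': "one_mor C F G m \<Longrightarrow> one_mor C F G a \<Longrightarrow> one_mor C F G b \<Longrightarrow>
   mor_le C F G m a \<Longrightarrow> mor_le C F G m b \<Longrightarrow>
   \<exists>c. one_mor C F G c \<and> mor_le C F G a c \<and> mor_le C F G b c"
proof -
  assume h: "one_mor C F G m" "one_mor C F G a" "one_mor C F G b" "mor_le C F G m a" "mor_le C F G m b"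
  obtain p q where m: "m = (p, q)" by (cases m)
  obtain p1 q1 where a: "a = (p1, q1)" by (cases a)
  obtain p2 q2 where b: "b = (p2, q2)" by (cases b)
  show ?thesis using amalg[of p q p1 q1 p2 q2] h unfolding m a b by blast
qed

lemma reach:
  assumes "mor_connected C F G m0 y" and m0: "one_mor C F G m0"
  shows "one_mor C F G y \<and> (\<exists>z. one_mor C F G z \<and> mor_le C F G m0 z \<and> mor_le C F G y z)"
  using assms(1) unfolding mor_connected_def
proof (induction rule: rtranclp_induct)
  case base
  then show ?case using m0 le_refl' by blast
next
  case (step y y')
  then obtain z where z: "one_mor C F G z" "mor_le C F G m0 z" "mor_le C F G y z" by blast
  have yy: "one_mor C F G y" "one_mor C F G y'" using step by auto
  from step(2) consider "mor_le C F G y y'" | "mor_le C F G y' y" by blast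
  then show ?case
  proof cases
    case 1
    then obtain w where w: "one_mor C F G w" "mor_le C F G z w" "mor_le C F G y' w"
      using amalg'[OF yy(1) z(1) yy(2) z(3)] by blast
    have "mor_le C F G m0 w" using le_trans'[OF m0 z(1) w(1) z(2) w(2)] .
    then show ?thesis using w yy by blast
  next
    case 2
    then show ?thesis using le_trans'[OF yy(2) yy(1) z(1) 2 z(3)] z yy by blast
  qed
qed

end

theorem corollary3p7:
  fixes C :: "('o,'m) cat" and F :: "('a,'o,'m) diag" and G :: "('b,'o,'m) diag"
  assumes "category C" and "pro_obj C F" and "pro_obj C G"
  shows "\<forall>K\<in>mor_components C F G. directed_on K (mor_le C F G)"
proof
  interpret setup3 C F G using assms by unfold_locales
  fix K assume "K \<in> mor_components C F G"
  then obtain m0 where K: "K = {m'. mor_connected C F G m0 m'}" and m0: "one_mor C F G m0"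
    unfolding mor_components_def by blast
  show "directed_on K (mor_le C F G)"
    unfolding directed_on_def
  proof (intro conjI ballI)
    have "m0 \<in> K" unfolding K mor_connected_def by simp
    then show "K \<noteq> {}" by blast
  next
    fix x y assume x: "x \<in> K" and y: "y \<in> K"
    obtain zx where zx: "one_mor C F G zx" "mor_le C F G m0 zx" "mor_le C F G x zx" "one_mor C F G x"
      using reach[OF _ m0] x unfolding K by blast
    obtain zy where zy: "one_mor C F G zy" "mor_le C F G m0 zy" "mor_le C F G y zy" "one_mor C F G y"
      using reach[OF _ m0] y unfolding K by blast
    obtain w where w: "one_mor C F G w" "mor_le C F G zx w" "mor_le C F G zy w"
      using amalg'[OF m0 zx(1) zy(1) zx(2) zy(2)] by blast
    have "mor_le C F G m0 w" using le_trans'[OF m0 zx(1) w(1) zx(2) w(2)] .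
    then have "w \<in> K" unfolding K mor_connected_def mem_Collect_eq
      by (rule r_into_rtranclp[where r="\<lambda>m m'. one_mor C F G m \<and> one_mor C F G m' \<and>
      (mor_le C F G m m' \<or> mor_le C F G m' m)", OF conjI[OF m0 conjI[OF w(1) disjI1]]])
    moreover have "mor_le C F G x w" using le_trans'[OF zx(4) zx(1) w(1) zx(3) w(2)] .
    moreover have "mor_le C F G y w" using le_trans'[OF zy(4) zy(1) w(1) zy(3) w(3)] .
    ultimately show "\<exists>z\<in>K. mor_le C F G x z \<and> mor_le C F G y z" by blast
  qed
qed

end
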